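(* For all $k \ge 2$ and $n \ge 6$, \[ w(n,k) = w(n-1,k-1) + w(n-2,k), \] where $w(m,j)$ is the number of compositions of $m$ with all parts in $\{1,2\}$ having exactly $j$ water cells.
   Context: A composition of $n \ge 0$ is a finite sequence $(c_1,\dots,c_t)$ of positive integers with $c_1+\cdots+c_t=n$; the empty composition is the unique composition of $0$. Let $C_{12}(n)$ be the set of compositions of $n$ all of whose parts lie in $\{1,2\}$. The number of water cells of a composition $(c_1,\dots,c_t)$ is $\sum_{i=1}^{t} \max\bigl(0, \min(\max_{j \le i} c_j, \max_{j \ge i} c_j) - c_i\bigr)$ (the number of unit squares that would hold water poured over its bargraph, in which column $i$ has height $c_i$). For $n,k \ge 0$, $W(n,k)$ is the set of compositions in $C_{12}(n)$ with exactly $k$ water cells and $w(n,k)=|W(n,k)|$. *)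

theory Defs
  imports Main
begin

definition C12 :: "nat \<Rightarrow> nat list set" where
  "C12 n = {c. set c \<subseteq> {1, 2} \<and> sum_list c = n}"

text \<open>Water cells: sum over positions i of max 0 (min (max of prefix up to i) (max of suffix from i) - c_i).
  Uses 0-based indexing; nat subtraction realises the max with 0.\<close>

definition water :: "nat list \<Rightarrow> nat" where
  "water c = (\<Sum>i<length c.
      min (Max (set (take (Suc i) c))) (Max (set (drop i c))) - c ! i)"

definition W :: "nat \<Rightarrow> nat \<Rightarrow> nat list set" where
  "W n k = {c \<in> C12 n. water c = k}"

definition w :: "nat \<Rightarrow> nat \<Rightarrow> nat" where
  "w n k = card (W n k)"

end

theory Submission
  imports Defs
begin

fun hh :: "nat list \<Rightarrow> nat" where
  "hh [] = 0"
| "hh (x#r) = (if x = 1 \<and> 2 \<in> set r then 1 else 0) + hh r"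

fun wt :: "nat list \<Rightarrow> nat" where
  "wt [] = 0"
| "wt (x#r) = (if x = 2 then hh r else wt r)"

definition S :: "bool \<Rightarrow> nat list \<Rightarrow> nat" where
  "S p c = (\<Sum>i<length c. if c!i = 1 \<and> (p \<or> 2 \<in> set (take i c)) \<and> 2 \<in> set (drop (Suc i) c) then 1 else 0)"

lemma S_Nil: "S p [] = 0" by (simp add: S_def)

lemma S_Cons: "S p (x#r) = (if x = 1 \<and> p \<and> 2 \<in> set r then 1 else 0) + S (p \<or> x = 2) r"
  unfolding S_def by (simp add: sum.lessThan_Suc_shift del: sum.lessThan_Suc)

lemma S_True: "S True r = hh r"
  by (induction r) (auto simp: S_Nil S_Cons)

lemma S_False: "S False r = wt r"
  by (induction r) (auto simp: S_Nil S_Cons S_True)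

lemma Max12: "set xs \<subseteq> {1,2} \<Longrightarrow> xs \<noteq> [] \<Longrightarrow> Max (set xs) = (if (2::nat) \<in> set xs then 2 else 1)"
proof (cases "2 \<in> set xs")
  case True
  assume "set xs \<subseteq> {1,2}"
  then show ?thesis using True by (intro Max_eqI) auto
next
  case False
  assume a: "set xs \<subseteq> {1,2}" "xs \<noteq> []"
  then have "set xs = {1}" using False by (cases xs) auto
  then show ?thesis using False by simp
qed

lemma water_S: assumes "set c \<subseteq> {1,2}" shows "water c = S False c"
  unfolding water_def S_def
proof (rule sum.cong[OF refl])
  fix i assume "i \<in> {..<length c}"
  then have i: "i < length c" by simp
  have t: "take (Suc i) c = take i c @ [c!i]" using i by (simp add: take_Suc_conv_app_nth)
  have d: "drop i c = c!i # drop (Suc i) c" using i by (simp add: Cons_nth_drop_Suc)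
  have ci: "c!i \<in> {1,2}" using i assms nth_mem by blast
  have s1: "set (take (Suc i) c) \<subseteq> {1,2}" using assms set_take_subset by fastforce
  have s2: "set (drop i c) \<subseteq> {1,2}" using assms set_drop_subset by fastforce
  show "min (Max (set (take (Suc i) c))) (Max (set (drop i c))) - c ! i =
    (if c!i = 1 \<and> (False \<or> 2 \<in> set (take i c)) \<and> 2 \<in> set (drop (Suc i) c) then 1 else 0)"
    using ci Max12[OF s1] Max12[OF s2] unfolding t d by auto
qed

lemma hh_no2: "2 \<notin> set r \<Longrightarrow> hh r = 0" by (induction r) auto
lemma wt_no2: "2 \<notin> set r \<Longrightarrow> wt r = 0" by (induction r) (auto simp: hh_no2)
lemma wt_pos: "wt c \<ge> 1 \<Longrightarrow> 2 \<in> set c" using wt_no2 by fastforce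

fun ins :: "nat \<Rightarrow> nat list \<Rightarrow> nat list" where
  "ins x [] = []"
| "ins x (y#r) = (if y = 2 then 2 # x # r else y # ins x r)"

lemma ins_inj: "ins x c = ins x d \<Longrightarrow> c = d"
proof (induction c arbitrary: d)
  case Nil then show ?case by (cases d) (auto split: if_splits)
next
  case (Cons y r) then show ?case by (cases d) (auto split: if_splits)
qed

lemma ins_disj: "2 \<in> set a \<Longrightarrow> ins 1 a \<noteq> ins 2 b"
proof (induction a arbitrary: b)
  case Nil then show ?case by simp
next
  case (Cons y r) then show ?case by (cases b) (auto split: if_splits)
qed

lemma ins_set: "set (ins x c) \<subseteq> insert x (set c)" by (induction c) auto
lemma ins_sum: "2 \<in> set c \<Longrightarrow> sum_list (ins x c) = sum_list c + x" by (induction c) auto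
lemma wt_ins2: "wt (ins 2 c) = wt c" by (induction c) auto
lemma wt_ins1: "wt c \<ge> 1 \<Longrightarrow> wt (ins 1 c) = Suc (wt c)"
  by (induction c) (auto simp: hh_no2 dest: wt_pos)
lemma wt_ins1': "wt (ins 1 c) \<ge> 2 \<Longrightarrow> wt c = wt (ins 1 c) - 1"
proof (induction c)
  case Nil then show ?case by simp
next
  case (Cons y r)
  show ?case
  proof (cases "y = 2")
    case True
    then show ?thesis using Cons.prems by (cases "2 \<in> set r") (auto simp: hh_no2)
  qed (use Cons in auto)
qed

lemma decomp: "wt c \<ge> 1 \<Longrightarrow> set c \<subseteq> {1,2} \<Longrightarrow>
  \<exists>x d. x \<in> {1,2} \<and> set d \<subseteq> {1,2} \<and> c = ins x d \<and> 2 \<in> set d"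
proof (induction c)
  case Nil then show ?case by simp
next
  case (Cons y r)
  show ?case
  proof (cases "y = 2")
    case True
    then have "r \<noteq> []" using Cons.prems by auto
    then obtain z r' where r: "r = z # r'" by (cases r) auto
    show ?thesis
      by (rule exI[of _ z], rule exI[of _ "2 # r'"]) (use True r Cons.prems in auto)
  next
    case False
    then obtain x d where "x \<in> {1,2}" "set d \<subseteq> {1,2}" "r = ins x d" "2 \<in> set d"
      using Cons by auto
    then show ?thesis using False Cons.prems
      by (intro exI[of _ x] exI[of _ "y # d"]) auto
  qed
qed

lemma len_le: "set c \<subseteq> {1,2} \<Longrightarrow> length c \<le> sum_list (c::nat list)"
  by (induction c) auto

lemma W_alt: "W n k = {c. set c \<subseteq> {1,2} \<and> sum_list c = n \<and> wt c = k}"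
  unfolding W_def C12_def using water_S S_False by auto

lemma W_fin: "finite (W n k)"
proof -
  have "W n k \<subseteq> {c. set c \<subseteq> {1,2} \<and> length c \<le> n}"
    unfolding W_alt using len_le by auto
  moreover have "finite {c. set c \<subseteq> ({1,2}::nat set) \<and> length c \<le> n}"
    by (rule finite_lists_length_le) simp
  ultimately show ?thesis by (rule finite_subset)
qed

lemma W_split: assumes "k \<ge> 2"
  shows "W n k = ins 1 ` W (n-1) (k-1) \<union> ins 2 ` W (n-2) k"
proof
  show "W n k \<subseteq> ins 1 ` W (n-1) (k-1) \<union> ins 2 ` W (n-2) k"
  proof
    fix c assume c: "c \<in> W n k"
    then have c1: "set c \<subseteq> {1,2}" "sum_list c = n" "wt c = k" unfolding W_alt by auto
    then obtain x d where xd: "x \<in> {1,2}" "set d \<subseteq> {1,2}" "c = ins x d" "2 \<in> set d"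
      using decomp[of c] c1 assms by auto
    show "c \<in> ins 1 ` W (n-1) (k-1) \<union> ins 2 ` W (n-2) k"
    proof (cases "x = 1")
      case True
      have "wt d = k - 1" using wt_ins1'[of d] c1 xd True assms by simp
      moreover have "sum_list d = n - 1" using ins_sum[OF xd(4), of x] c1 xd True by simp
      ultimately have "d \<in> W (n-1) (k-1)" using xd unfolding W_alt by auto
      moreover have "c = ins 1 d" using xd True by simp
      ultimately show ?thesis by (intro UnI1 image_eqI)
    next
      case False
      then have x2: "x = 2" using xd by auto
      have "wt d = k" using wt_ins2[of d] c1 xd x2 by simp
      moreover have "sum_list d = n - 2" using ins_sum[OF xd(4), of x] c1 xd x2 by simp
      ultimately have "d \<in> W (n-2) k" using xd unfolding W_alt by auto
      moreover have "c = ins 2 d" using xd x2 by simp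
      ultimately show ?thesis by (intro UnI2 image_eqI)
    qed
  qed
next
  show "ins 1 ` W (n-1) (k-1) \<union> ins 2 ` W (n-2) k \<subseteq> W n k"
  proof
    fix c assume "c \<in> ins 1 ` W (n-1) (k-1) \<union> ins 2 ` W (n-2) k"
    then show "c \<in> W n k"
    proof
      assume "c \<in> ins 1 ` W (n-1) (k-1)"
      then obtain d where d: "c = ins 1 d" "set d \<subseteq> {1,2}" "sum_list d = n - 1" "wt d = k - 1"
        unfolding W_alt by auto
      have d2: "2 \<in> set d" using wt_pos d assms by simp
      have "sum_list d \<ge> 2" using d2 member_le_sum_list by fastforce
      moreover have "set (ins 1 d) \<subseteq> {1,2}" using ins_set[of 1 d] d(2) by auto
      moreover have "wt (ins 1 d) = k" using wt_ins1[of d] d(4) assms by simp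
      ultimately show ?thesis using d(1,3) ins_sum[OF d2, of 1] unfolding W_alt by simp
    next
      assume "c \<in> ins 2 ` W (n-2) k"
      then obtain d where d: "c = ins 2 d" "set d \<subseteq> {1,2}" "sum_list d = n - 2" "wt d = k"
        unfolding W_alt by auto
      have d2: "2 \<in> set d" using wt_pos d assms by simp
      have "sum_list d \<ge> 2" using d2 member_le_sum_list by fastforce
      moreover have "set (ins 2 d) \<subseteq> {1,2}" using ins_set[of 2 d] d(2) by auto
      moreover have "wt (ins 2 d) = k" using wt_ins2[of d] d(4) by simp
      ultimately show ?thesis using d(1,3) ins_sum[OF d2, of 2] unfolding W_alt by simp
    qed
  qed
qed

theorem theorem2p4:
  fixes n k :: nat
  assumes "k \<ge> 2" and "n \<ge> 6"
  shows "w n k = w (n - 1) (k - 1) + w (n - 2) k"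
proof -
  have inj: "inj (ins x)" for x by (rule injI) (rule ins_inj)
  have disj: "ins 1 ` W (n-1) (k-1) \<inter> ins 2 ` W (n-2) k = {}"
  proof (rule ccontr)
    assume "ins 1 ` W (n-1) (k-1) \<inter> ins 2 ` W (n-2) k \<noteq> {}"
    then obtain a b where ab: "a \<in> W (n-1) (k-1)" "b \<in> W (n-2) k" "ins 1 a = ins 2 b" by blast
    have "wt a = k - 1" using ab(1) unfolding W_alt by simp
    then have a2: "2 \<in> set a" using wt_pos[of a] assms by simp
    show False using ins_disj[OF a2, of b] ab(3) by simp
  qed
  have "w n k = card (ins 1 ` W (n-1) (k-1)) + card (ins 2 ` W (n-2) k)"
    unfolding w_def W_split[OF assms(1), of n]
    by (rule card_Un_disjoint[OF _ _ disj]) (simp_all add: W_fin)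
  also have "\<dots> = w (n - 1) (k - 1) + w (n - 2) k"
    unfolding w_def by (simp add: card_image[OF inj_on_subset[OF inj subset_UNIV]])
  finally show ?thesis .
qed

end
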